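(* The characters (non-zero complex homomorphisms, not necessarily continuous) of $C(X)'_{00}$ are, without multiple occurrences, the following, where $\sum_kf_k\delta^k\in C(X)'_{00}$: (i) for $x\notin\bigcup_{q\ge1}\mathrm{Fix}_q(\sigma)^\circ$: $\omega_x\big(\sum_kf_k\delta^k\big)=f_0(x)$; (ii) for $x\in\bigcup_{q\ge1}\mathrm{Fix}_q(\sigma)^\circ$ and $c\in\mathbb{C}\setminus\{0\}$: $\omega_{x,c}\big(\sum_kf_k\delta^k\big)=\sum_jf_{jn}(x)c^j$, where $n$ is the minimal $n\ge1$ such that $x\in\mathrm{Fix}_n(\sigma)^\circ$.
   Context: Let $X$ be a non-empty compact Hausdorff space and $\sigma:X\to X$ a homeomorphism; $\mathrm{Fix}_k(\sigma)=\{x:\sigma^kx=x\}$, superscript $\circ$ denotes interior, $\mathrm{supp}(f)$ the closure of $\{f\ne0\}$. $C(X)$ is the algebra of continuous complex functions. $c_{00}(\Sigma)$ is the unital algebra of finite formal sums $\sum_kf_k\delta^k$ ($f_k\in C(X)$) with multiplication determined by $f\delta^k\cdot g\delta^l=f\,(g\circ\sigma^{-k})\,\delta^{k+l}$; $C(X)$ is embedded as $\{f\delta^0\}$. $C(X)'_{00}$ is the commutant of $C(X)$ in $c_{00}(\Sigma)$; it equals $\{\sum_kf_k\delta^k:\mathrm{supp}(f_k)\subset\mathrm{Fix}_k(\sigma)\ \forall k\}$ and is commutative. *)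

theory Defs
  imports "HOL-Analysis.Analysis"
begin

text \<open>Elements of c00(Sigma): finite formal sums sum_k f_k delta^k, represented by
  coefficient families F :: int => X => complex (F k = f_k) with finite support
  and continuous coefficients.\<close>

definition zpow :: "('a \<Rightarrow> 'a) \<Rightarrow> int \<Rightarrow> 'a \<Rightarrow> 'a" where
  "zpow \<sigma> k = (if 0 \<le> k then \<sigma> ^^ nat k else (inv \<sigma>) ^^ nat (- k))"

definition c00 :: "(int \<Rightarrow> 'a::topological_space \<Rightarrow> complex) set" where
  "c00 = {F. finite {k. F k \<noteq> (\<lambda>x. 0)} \<and> (\<forall>k. continuous_on UNIV (F k))}"

text \<open>Multiplication determined by  f delta^k * g delta^l = f (g o sigma^(-k)) delta^(k+l).\<close>
definition cmult :: "('a \<Rightarrow> 'a) \<Rightarrow> (int \<Rightarrow> 'a \<Rightarrow> complex) \<Rightarrow> (int \<Rightarrow> 'a \<Rightarrow> complex)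
    \<Rightarrow> (int \<Rightarrow> 'a \<Rightarrow> complex)" where
  "cmult \<sigma> F G = (\<lambda>m x. \<Sum>k\<in>{k. F k \<noteq> (\<lambda>x. 0)}. F k x * G (m - k) (zpow \<sigma> (- k) x))"

definition embed0 :: "('a \<Rightarrow> complex) \<Rightarrow> (int \<Rightarrow> 'a \<Rightarrow> complex)" where
  "embed0 f = (\<lambda>k. if k = 0 then f else (\<lambda>x. 0))"

definition commutant00 :: "('a::topological_space \<Rightarrow> 'a) \<Rightarrow> (int \<Rightarrow> 'a \<Rightarrow> complex) set" where
  "commutant00 \<sigma> = {F \<in> c00. \<forall>f. continuous_on UNIV f \<longrightarrow>
      cmult \<sigma> F (embed0 f) = cmult \<sigma> (embed0 f) F}"

definition is_character :: "('a::topological_space \<Rightarrow> 'a) \<Rightarrow> ((int \<Rightarrow> 'a \<Rightarrow> complex) \<Rightarrow> complex) \<Rightarrow> bool" where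
  "is_character \<sigma> \<omega> \<longleftrightarrow>
     (\<forall>F\<in>commutant00 \<sigma>. \<forall>G\<in>commutant00 \<sigma>.
        \<omega> (\<lambda>k x. F k x + G k x) = \<omega> F + \<omega> G \<and> \<omega> (cmult \<sigma> F G) = \<omega> F * \<omega> G) \<and>
     (\<forall>F\<in>commutant00 \<sigma>. \<forall>a::complex. \<omega> (\<lambda>k x. a * F k x) = a * \<omega> F) \<and>
     (\<exists>F\<in>commutant00 \<sigma>. \<omega> F \<noteq> 0)"

definition Fix :: "('a \<Rightarrow> 'a) \<Rightarrow> nat \<Rightarrow> 'a set" where
  "Fix \<sigma> k = {x. (\<sigma> ^^ k) x = x}"

definition Uper :: "('a::topological_space \<Rightarrow> 'a) \<Rightarrow> 'a set" where
  "Uper \<sigma> = (\<Union>q\<in>{1..}. interior (Fix \<sigma> q))"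

definition minper :: "('a::topological_space \<Rightarrow> 'a) \<Rightarrow> 'a \<Rightarrow> nat" where
  "minper \<sigma> x = (LEAST n. 1 \<le> n \<and> x \<in> interior (Fix \<sigma> n))"

definition omega1 :: "'a \<Rightarrow> (int \<Rightarrow> 'a \<Rightarrow> complex) \<Rightarrow> complex" where
  "omega1 x F = F 0 x"

definition omega2 :: "('a::topological_space \<Rightarrow> 'a) \<Rightarrow> 'a \<Rightarrow> complex \<Rightarrow> (int \<Rightarrow> 'a \<Rightarrow> complex) \<Rightarrow> complex" where
  "omega2 \<sigma> x c F = (\<Sum>j\<in>{j. F (j * int (minper \<sigma> x)) \<noteq> (\<lambda>y. 0)}. F (j * int (minper \<sigma> x)) x * c powi j)"

end

theory Submission
  imports Defs
begin

lemma Hausdorff_euclidean_t2: "Hausdorff_space (euclidean :: 'a::t2_space topology)"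
  unfolding Hausdorff_space_def disjnt_def using hausdorff by auto

lemma urysohn_pt:
  fixes x :: "'a::t2_space"
  assumes "compact (UNIV :: 'a set)" "open U" "x \<in> U"
  shows "\<exists>\<phi>::'a\<Rightarrow>complex. continuous_on UNIV \<phi> \<and> \<phi> x = 1 \<and> (\<forall>y. y \<notin> U \<longrightarrow> \<phi> y = 0)"
proof -
  have cs: "compact_space (euclidean :: 'a topology)"
    using assms(1) by (simp add: compact_space_def)
  have "regular_space (euclidean :: 'a topology)"
    by (rule compact_Hausdorff_imp_regular_space[OF cs Hausdorff_euclidean_t2])
  moreover have "Lindelof_space (euclidean :: 'a topology)"
    by (rule compact_imp_Lindelof_space[OF cs])
  ultimately have "normal_space (euclidean :: 'a topology)"
    by (rule regular_Lindelof_imp_normal_space)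
  then have cr: "completely_regular_space (euclidean :: 'a topology)"
    using normal_imp_completely_regular_space Hausdorff_euclidean_t2 by blast
  have "closedin euclidean (- U)" using assms(2) by (simp add: closed_Compl)
  then obtain f :: "'a \<Rightarrow> real" where f: "continuous_map euclidean (top_of_set {0..1}) f"
    "f x = 0" "f ` (-U) \<subseteq> {1}"
    using cr assms(3) unfolding completely_regular_space_def by force
  have "continuous_on UNIV f" using f(1)
    by (metis continuous_map_in_subtopology continuous_map_iff_continuous open_UNIV subtopology_UNIV)
  then have "continuous_on UNIV (\<lambda>y. complex_of_real (1 - f y))"
    by (intro continuous_intros)
  then show ?thesis using f(2,3) by (intro exI[of _ "\<lambda>y. complex_of_real (1 - f y)"]) auto
qed

definition suppF :: "(int \<Rightarrow> 'a \<Rightarrow> complex) \<Rightarrow> int set" where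
  "suppF F = {k. F k \<noteq> (\<lambda>x. 0)}"

definition monoF :: "int \<Rightarrow> ('a \<Rightarrow> complex) \<Rightarrow> int \<Rightarrow> 'a \<Rightarrow> complex" where
  "monoF k \<psi> = (\<lambda>m. if m = k then \<psi> else (\<lambda>y. 0))"

lemma embed0_mono: "embed0 f = monoF 0 f"
  unfolding embed0_def monoF_def by auto

lemma zpow_0[simp]: "zpow \<sigma> 0 = id"
  unfolding zpow_def by simp

lemma funpow_inv_cancel1:
  fixes \<sigma> :: "'a \<Rightarrow> 'a"
  assumes "bij \<sigma>"
  shows "(\<sigma> ^^ m) ((inv \<sigma> ^^ m) y) = y"
proof (induction m arbitrary: y)
  case 0 show ?case by simp
next
  case (Suc m)
  have "(\<sigma> ^^ Suc m) ((inv \<sigma> ^^ Suc m) y) = (\<sigma> ^^ m) (\<sigma> (inv \<sigma> ((inv \<sigma> ^^ m) y)))"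
    by (simp only: funpow_Suc_right[of m \<sigma>] funpow.simps comp_def funpow_swap1)
  also have "\<dots> = y" using Suc.IH assms by (simp add: bij_is_surj surj_f_inv_f)
  finally show ?case .
qed

lemma funpow_inv_cancel2:
  fixes \<sigma> :: "'a \<Rightarrow> 'a"
  assumes "bij \<sigma>"
  shows "(inv \<sigma> ^^ m) ((\<sigma> ^^ m) y) = y"
proof (induction m arbitrary: y)
  case 0 show ?case by simp
next
  case (Suc m)
  have "(inv \<sigma> ^^ Suc m) ((\<sigma> ^^ Suc m) y) = (inv \<sigma> ^^ m) (inv \<sigma> (\<sigma> ((\<sigma> ^^ m) y)))"
    by (simp only: funpow_Suc_right[of m "inv \<sigma>"] funpow.simps comp_def funpow_swap1)
  also have "\<dots> = y" using Suc.IH assms by (simp add: bij_is_inj inv_f_f)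
  finally show ?case .
qed

lemma zpow_fix_iff:
  fixes \<sigma> :: "'a \<Rightarrow> 'a"
  assumes "bij \<sigma>"
  shows "zpow \<sigma> (-k) y = y \<longleftrightarrow> (\<sigma> ^^ nat \<bar>k\<bar>) y = y"
proof (cases "k \<ge> 0")
  case True
  then have z: "zpow \<sigma> (-k) = inv \<sigma> ^^ nat k" unfolding zpow_def by auto
  have "(inv \<sigma> ^^ nat k) y = y \<longleftrightarrow> (\<sigma> ^^ nat k) y = y"
    using funpow_inv_cancel1[OF assms, of "nat k" y] funpow_inv_cancel2[OF assms, of "nat k" y]
    by metis
  then show ?thesis using True z by simp
next
  case False
  then show ?thesis unfolding zpow_def by auto
qed

lemma funpow_fix_mult:
  fixes \<sigma> :: "'a \<Rightarrow> 'a"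
  assumes "(\<sigma> ^^ n) y = y"
  shows "(\<sigma> ^^ (n * j)) y = y"
proof (induction j)
  case 0 then show ?case by simp
next
  case (Suc j)
  have e: "n * Suc j = n*j + n" by simp
  have "(\<sigma> ^^ (n * Suc j)) y = (\<sigma> ^^ (n * j)) ((\<sigma> ^^ n) y)"
    by (simp only: e funpow_add comp_def)
  then show ?case using Suc assms by simp
qed

lemma Fix_gcd:
  fixes \<sigma> :: "'a \<Rightarrow> 'a"
  assumes "(\<sigma> ^^ a) y = y" "(\<sigma> ^^ b) y = y" "a \<noteq> 0"
  shows "(\<sigma> ^^ gcd a b) y = y"
proof -
  obtain u v where uv: "a * u = b * v + gcd a b" using bezout_nat[OF assms(3)] by blast
  have "(\<sigma> ^^ (a * u)) y = y" by (rule funpow_fix_mult[OF assms(1)])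
  also have "(\<sigma> ^^ (a * u)) y = (\<sigma> ^^ gcd a b) ((\<sigma> ^^ (b * v)) y)"
    by (simp add: uv funpow_add add.commute)
  also have "(\<sigma> ^^ (b * v)) y = y" by (rule funpow_fix_mult[OF assms(2)])
  finally show ?thesis .
qed

lemma supp_mono: "suppF (monoF k \<psi>) = (if \<psi> = (\<lambda>x. 0) then {} else {k})"
  unfolding suppF_def monoF_def by auto

lemma cmult_mono_left:
  "cmult \<sigma> (monoF k \<psi>) G m y = \<psi> y * G (m - k) (zpow \<sigma> (-k) y)"
proof -
  have s: "{ka. monoF k \<psi> ka \<noteq> (\<lambda>x. 0)} = suppF (monoF k \<psi>)" by (simp add: suppF_def)
  show ?thesis unfolding cmult_def s supp_mono
    by (cases "\<psi> = (\<lambda>x. 0)") (auto simp: monoF_def)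
qed

lemma cmult_mono_right:
  assumes "finite (suppF F)"
  shows "cmult \<sigma> F (monoF l g) m y = F (m - l) y * g (zpow \<sigma> (-(m - l)) y)"
proof -
  have "cmult \<sigma> F (monoF l g) m y = (\<Sum>k\<in>suppF F. if k = m - l then F k y * g (zpow \<sigma> (-k) y) else 0)"
    unfolding cmult_def suppF_def[symmetric] by (intro sum.cong) (auto simp: monoF_def)
  also have "\<dots> = (if m - l \<in> suppF F then F (m - l) y * g (zpow \<sigma> (-(m-l)) y) else 0)"
    using assms by (simp add: sum.delta')
  also have "\<dots> = F (m - l) y * g (zpow \<sigma> (-(m - l)) y)"
    by (auto simp: suppF_def)
  finally show ?thesis .
qed

definition sepd :: "'a::topological_space itself \<Rightarrow> bool" where
  "sepd _ \<longleftrightarrow> (\<forall>x y::'a. x \<noteq> y \<longrightarrow> (\<exists>f::'a\<Rightarrow>complex. continuous_on UNIV f \<and> f x \<noteq> f y))"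

lemma sepd_compact:
  assumes "compact (UNIV :: 'a::t2_space set)"
  shows "sepd TYPE('a)"
  unfolding sepd_def
proof (intro allI impI)
  fix x y :: 'a assume "x \<noteq> y"
  then have "x \<in> - {y}" by simp
  moreover have "open (- {y})" by (simp add: open_Compl)
  ultimately obtain \<phi> :: "'a \<Rightarrow> complex" where "continuous_on UNIV \<phi>" "\<phi> x = 1" "\<forall>z. z \<notin> - {y} \<longrightarrow> \<phi> z = 0"
    using urysohn_pt[OF assms] by blast
  then show "\<exists>f::'a\<Rightarrow>complex. continuous_on UNIV f \<and> f x \<noteq> f y" by (intro exI[of _ \<phi>]) auto
qed

lemma c00_finite: "F \<in> c00 \<Longrightarrow> finite (suppF F)"
  unfolding c00_def suppF_def by auto

lemma comm_iff:
  fixes F :: "int \<Rightarrow> 'a::topological_space \<Rightarrow> complex"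
  assumes "sepd TYPE('a)"
  shows "F \<in> commutant00 \<sigma> \<longleftrightarrow> F \<in> c00 \<and> (\<forall>k y. F k y \<noteq> 0 \<longrightarrow> zpow \<sigma> (-k) y = y)"
proof (cases "F \<in> c00")
  case True
  have fin: "finite (suppF F)" using True by (rule c00_finite)
  have e: "cmult \<sigma> F (embed0 f) = cmult \<sigma> (embed0 f) F \<longleftrightarrow>
       (\<forall>m y. F m y * f (zpow \<sigma> (-m) y) = f y * F m y)" for f
    by (simp add: fun_eq_iff embed0_mono cmult_mono_right[OF fin] cmult_mono_left)
  show ?thesis
  proof
    assume "F \<in> commutant00 \<sigma>"
    then have h: "\<And>f m y. continuous_on UNIV f \<Longrightarrow> F m y * f (zpow \<sigma> (-m) y) = f y * F m y"
      unfolding commutant00_def using e by blast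
    have "zpow \<sigma> (-k) y = y" if "F k y \<noteq> 0" for k y
    proof (rule ccontr)
      assume "zpow \<sigma> (-k) y \<noteq> y"
      then obtain f :: "'a \<Rightarrow> complex" where "continuous_on UNIV f" "f (zpow \<sigma> (-k) y) \<noteq> f y"
        using assms unfolding sepd_def by blast
      with h[of f k y] that show False by simp
    qed
    then show "F \<in> c00 \<and> (\<forall>k y. F k y \<noteq> 0 \<longrightarrow> zpow \<sigma> (-k) y = y)" using True by blast
  next
    assume a: "F \<in> c00 \<and> (\<forall>k y. F k y \<noteq> 0 \<longrightarrow> zpow \<sigma> (-k) y = y)"
    have "F m y * f (zpow \<sigma> (-m) y) = f y * F m y" for f m y
      using a by (cases "F m y = 0") auto
    then have "\<forall>m y. F m y * f (zpow \<sigma> (-m) y) = f y * F m y" for f by blast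
    then show "F \<in> commutant00 \<sigma>" unfolding commutant00_def using True e by blast
  qed
next
  case False then show ?thesis unfolding commutant00_def by blast
qed

lemma mono_c00: "monoF k \<psi> \<in> c00 \<longleftrightarrow> continuous_on UNIV \<psi>"
proof -
  have "{m. monoF k \<psi> m \<noteq> (\<lambda>x. 0)} \<subseteq> {k}" by (auto simp: monoF_def)
  then have "finite {m. monoF k \<psi> m \<noteq> (\<lambda>x. 0)}" by (rule finite_subset) simp
  moreover have "(\<forall>m. continuous_on UNIV (monoF k \<psi> m)) \<longleftrightarrow> continuous_on UNIV \<psi>"
    unfolding monoF_def by (auto intro: continuous_on_const)
  ultimately show ?thesis unfolding c00_def by blast
qed

lemma mono_comm:
  fixes \<psi> :: "'a::topological_space \<Rightarrow> complex"
  assumes "sepd TYPE('a)"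
  shows "monoF k \<psi> \<in> commutant00 \<sigma> \<longleftrightarrow> continuous_on UNIV \<psi> \<and> (\<forall>y. \<psi> y \<noteq> 0 \<longrightarrow> zpow \<sigma> (-k) y = y)"
  unfolding comm_iff[OF assms] mono_c00 by (auto simp: monoF_def)

lemma embed0_comm:
  fixes f :: "'a::topological_space \<Rightarrow> complex"
  assumes "sepd TYPE('a)" "continuous_on UNIV f"
  shows "embed0 f \<in> commutant00 \<sigma>"
  unfolding embed0_mono mono_comm[OF assms(1)] using assms(2) by simp

lemma comm_c00: "F \<in> commutant00 \<sigma> \<Longrightarrow> F \<in> c00"
  unfolding commutant00_def by blast

lemma comm_fix:
  fixes F :: "int \<Rightarrow> 'a::topological_space \<Rightarrow> complex"
  assumes "sepd TYPE('a)" "F \<in> commutant00 \<sigma>" "F k y \<noteq> 0"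
  shows "zpow \<sigma> (-k) y = y"
  using assms comm_iff by blast

lemma comm_cont: "F \<in> commutant00 \<sigma> \<Longrightarrow> continuous_on UNIV (F k)"
  unfolding commutant00_def c00_def by blast

lemma comm_mono_part:
  fixes F :: "int \<Rightarrow> 'a::topological_space \<Rightarrow> complex"
  assumes "sepd TYPE('a)" "F \<in> commutant00 \<sigma>"
  shows "monoF k (F k) \<in> commutant00 \<sigma>"
  unfolding mono_comm[OF assms(1)] using comm_cont[OF assms(2)] comm_fix[OF assms] by blast

lemma comm_zero:
  assumes "sepd TYPE('a::topological_space)"
  shows "(\<lambda>k (x::'a). 0) \<in> commutant00 \<sigma>"
  unfolding comm_iff[OF assms] c00_def by simp

lemma comm_add:
  fixes F G :: "int \<Rightarrow> 'a::topological_space \<Rightarrow> complex"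
  assumes "sepd TYPE('a)" "F \<in> commutant00 \<sigma>" "G \<in> commutant00 \<sigma>"
  shows "(\<lambda>k x. F k x + G k x) \<in> commutant00 \<sigma>"
proof -
  have "{k. (\<lambda>x. F k x + G k x) \<noteq> (\<lambda>x. 0)} \<subseteq> suppF F \<union> suppF G"
    unfolding suppF_def by auto
  then have "finite {k. (\<lambda>x. F k x + G k x) \<noteq> (\<lambda>x. 0)}"
    using c00_finite[OF comm_c00[OF assms(2)]] c00_finite[OF comm_c00[OF assms(3)]]
    by (meson finite_UnI finite_subset)
  moreover have "continuous_on UNIV (\<lambda>x. F k x + G k x)" for k
    using comm_cont[OF assms(2)] comm_cont[OF assms(3)] by (intro continuous_intros)
  moreover have "zpow \<sigma> (-k) y = y" if "F k y + G k y \<noteq> 0" for k y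
    using that comm_fix[OF assms(1,2)] comm_fix[OF assms(1,3)] by force
  ultimately show ?thesis unfolding comm_iff[OF assms(1)] c00_def by blast
qed

lemma comm_decomp:
  assumes "F \<in> c00"
  shows "F = (\<lambda>m x. \<Sum>k\<in>suppF F. monoF k (F k) m x)"
proof (intro ext)
  fix m x
  have "(\<Sum>k\<in>suppF F. monoF k (F k) m x) = (\<Sum>k\<in>suppF F. if k = m then F m x else 0)"
    by (intro sum.cong) (auto simp: monoF_def)
  also have "\<dots> = F m x" using c00_finite[OF assms] by (simp add: sum.delta suppF_def)
  finally show "F m x = (\<Sum>k\<in>suppF F. monoF k (F k) m x)" by simp
qed

lemma char_zero:
  assumes "sepd TYPE('a::topological_space)" "is_character \<sigma> \<omega>"
  shows "\<omega> (\<lambda>k (x::'a). 0) = 0"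
proof -
  have hom: "\<forall>F\<in>commutant00 \<sigma>. \<forall>a. \<omega> (\<lambda>k x. a * F k x) = a * \<omega> F"
    using assms(2) unfolding is_character_def by blast
  show ?thesis using spec[OF bspec[OF hom comm_zero[OF assms(1)]], of 0] by simp
qed

lemma char_sum:
  fixes G :: "'i \<Rightarrow> int \<Rightarrow> 'a::topological_space \<Rightarrow> complex"
  assumes "sepd TYPE('a)" "is_character \<sigma> \<omega>" "finite I" "\<forall>i\<in>I. G i \<in> commutant00 \<sigma>"
  shows "(\<lambda>k x. \<Sum>i\<in>I. G i k x) \<in> commutant00 \<sigma> \<and> \<omega> (\<lambda>k x. \<Sum>i\<in>I. G i k x) = (\<Sum>i\<in>I. \<omega> (G i))"
  using assms(3,4)
proof (induction I rule: finite_induct)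
  case empty
  then show ?case using comm_zero[OF assms(1)] char_zero[OF assms(1,2)] by simp
next
  case (insert i I)
  then have IH: "(\<lambda>k x. \<Sum>i\<in>I. G i k x) \<in> commutant00 \<sigma>"
      "\<omega> (\<lambda>k x. \<Sum>i\<in>I. G i k x) = (\<Sum>i\<in>I. \<omega> (G i))" and Gi: "G i \<in> commutant00 \<sigma>" by auto
  have e: "(\<lambda>k x. \<Sum>i\<in>insert i I. G i k x) = (\<lambda>k x. G i k x + (\<Sum>i\<in>I. G i k x))"
    using insert.hyps by simp
  show ?case unfolding e
    using comm_add[OF assms(1) Gi IH(1)] assms(2) Gi IH insert.hyps
    unfolding is_character_def by simp
qed

lemma char_decomp:
  fixes F :: "int \<Rightarrow> 'a::topological_space \<Rightarrow> complex"
  assumes "sepd TYPE('a)" "is_character \<sigma> \<omega>" "F \<in> commutant00 \<sigma>"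
  shows "\<omega> F = (\<Sum>k\<in>suppF F. \<omega> (monoF k (F k)))"
proof -
  have "\<omega> F = \<omega> (\<lambda>m x. \<Sum>k\<in>suppF F. monoF k (F k) m x)"
    by (rule arg_cong[OF comm_decomp[OF comm_c00[OF assms(3)]]])
  also have "\<dots> = (\<Sum>k\<in>suppF F. \<omega> (monoF k (F k)))"
    using char_sum[OF assms(1,2) c00_finite[OF comm_c00[OF assms(3)]], of "\<lambda>k. monoF k (F k)"]
      comm_mono_part[OF assms(1,3)] by blast
  finally show ?thesis .
qed

lemma char_mult:
  "is_character \<sigma> \<omega> \<Longrightarrow> F \<in> commutant00 \<sigma> \<Longrightarrow> G \<in> commutant00 \<sigma> \<Longrightarrow> \<omega> (cmult \<sigma> F G) = \<omega> F * \<omega> G"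
  unfolding is_character_def by blast

lemma char_add:
  "is_character \<sigma> \<omega> \<Longrightarrow> F \<in> commutant00 \<sigma> \<Longrightarrow> G \<in> commutant00 \<sigma> \<Longrightarrow> \<omega> (\<lambda>k x. F k x + G k x) = \<omega> F + \<omega> G"
  unfolding is_character_def by blast

lemma char_scal:
  "is_character \<sigma> \<omega> \<Longrightarrow> F \<in> commutant00 \<sigma> \<Longrightarrow> \<omega> (\<lambda>k x. a * F k x) = a * \<omega> F"
  unfolding is_character_def by blast

lemma cmult_embed0: "cmult \<sigma> (embed0 f) (embed0 g) = embed0 (\<lambda>y. f y * g y)"
  unfolding embed0_mono by (rule ext, rule ext, subst cmult_mono_left) (simp add: monoF_def)

lemma open_nz: "continuous_on UNIV (f :: 'a::topological_space \<Rightarrow> complex) \<Longrightarrow> open {y. f y \<noteq> 0}"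
  using open_Collect_neq[of f "\<lambda>y. 0"] by simp

lemma cmult_embed0_right: "F \<in> c00 \<Longrightarrow> cmult \<sigma> F (embed0 g) = (\<lambda>m y. F m y * g (zpow \<sigma> (-m) y))"
  by (auto simp: fun_eq_iff cmult_mono_right c00_finite embed0_mono)

lemma char_one:
  fixes \<omega> :: "(int \<Rightarrow> 'a::topological_space \<Rightarrow> complex) \<Rightarrow> complex"
  assumes "sepd TYPE('a)" "is_character \<sigma> \<omega>"
  shows "\<omega> (embed0 (\<lambda>y. 1)) = 1"
proof -
  obtain F where F: "F \<in> commutant00 \<sigma>" "\<omega> F \<noteq> 0" using assms(2) unfolding is_character_def by blast
  have "cmult \<sigma> F (embed0 (\<lambda>y. 1)) = F" using cmult_embed0_right[OF comm_c00[OF F(1)]] by simp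
  then have "\<omega> F = \<omega> F * \<omega> (embed0 (\<lambda>y. 1))"
    using char_mult[OF assms(2) F(1) embed0_comm[OF assms(1)], of "\<lambda>y. 1"] by simp
  then show ?thesis using F(2) by simp
qed

context
  fixes \<sigma> :: "'a::topological_space \<Rightarrow> 'a" and \<omega>
  assumes sep: "sepd TYPE('a)" and ch: "is_character \<sigma> \<omega>"
begin

lemma ce_add: "continuous_on UNIV f \<Longrightarrow> continuous_on UNIV g \<Longrightarrow>
   \<omega> (embed0 (\<lambda>y. f y + g y)) = \<omega> (embed0 f) + \<omega> (embed0 g)"
proof -
  assume f: "continuous_on UNIV f" and g: "continuous_on UNIV g"
  have "embed0 (\<lambda>y. f y + g y) = (\<lambda>k x. embed0 f k x + embed0 g k x)"
    by (auto simp: embed0_def fun_eq_iff)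
  then show ?thesis using char_add[OF ch embed0_comm[OF sep f] embed0_comm[OF sep g]] by simp
qed

lemma ce_scal: "continuous_on UNIV f \<Longrightarrow> \<omega> (embed0 (\<lambda>y. a * f y)) = a * \<omega> (embed0 f)"
proof -
  assume f: "continuous_on UNIV f"
  have "embed0 (\<lambda>y. a * f y) = (\<lambda>k x. a * embed0 f k x)"
    by (auto simp: embed0_def fun_eq_iff)
  then show ?thesis using char_scal[OF ch embed0_comm[OF sep f]] by simp
qed

lemma ce_mult: "continuous_on UNIV f \<Longrightarrow> continuous_on UNIV g \<Longrightarrow>
   \<omega> (embed0 (\<lambda>y. f y * g y)) = \<omega> (embed0 f) * \<omega> (embed0 g)"
proof -
  assume f: "continuous_on UNIV f" and g: "continuous_on UNIV g"
  show ?thesis using char_mult[OF ch embed0_comm[OF sep f] embed0_comm[OF sep g]] cmult_embed0[of \<sigma> f g]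
    by simp
qed

lemma ce_zero: "\<omega> (embed0 (\<lambda>y. 0)) = 0"
proof -
  have "embed0 (\<lambda>y::'a. 0::complex) = (\<lambda>k x. 0)" by (auto simp: embed0_def)
  then show ?thesis using char_zero[OF sep ch] by simp
qed

lemma ce_sum: "finite S \<Longrightarrow> (\<forall>i\<in>S. continuous_on UNIV (u i)) \<Longrightarrow>
   \<omega> (embed0 (\<lambda>y. \<Sum>i\<in>S. u i y)) = (\<Sum>i\<in>S. \<omega> (embed0 (u i)))"
proof (induction S rule: finite_induct)
  case empty then show ?case using ce_zero by simp
next
  case (insert i S)
  have c: "continuous_on UNIV (\<lambda>y. \<Sum>i\<in>S. u i y)"
    using insert by (intro continuous_intros) auto
  show ?case using insert ce_add[OF _ c, of "u i"] by simp
qed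

lemma char_point:
  assumes cpt: "compact (UNIV :: 'a set)"
  shows "\<exists>x. \<forall>f. continuous_on UNIV f \<longrightarrow> \<omega> (embed0 f) = f x"
proof (rule ccontr)
  assume "\<not> ?thesis"
  then have "\<forall>x. \<exists>g. continuous_on UNIV g \<and> \<omega> (embed0 g) = 0 \<and> g x \<noteq> 0"
  proof (intro allI)
    fix x
    assume "\<nexists>x. \<forall>f. continuous_on UNIV f \<longrightarrow> \<omega> (embed0 f) = f x"
    then obtain f where f: "continuous_on UNIV f" "\<omega> (embed0 f) \<noteq> f x" by blast
    define c where "c = \<omega> (embed0 f)"
    have c1: "continuous_on UNIV (\<lambda>y::'a. 1::complex)" by simp
    have e1: "\<omega> (embed0 (\<lambda>y. f y + (- c) * 1)) = \<omega> (embed0 f) + \<omega> (embed0 (\<lambda>y. (- c) * 1))"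
      by (rule ce_add[OF f(1)]) simp
    have e2: "\<omega> (embed0 (\<lambda>y. (- c) * 1)) = (- c) * \<omega> (embed0 (\<lambda>y. 1))"
      by (rule ce_scal[OF c1])
    have z: "\<omega> (embed0 (\<lambda>y. f y + (- c) * 1)) = 0"
      by (simp only: e1 e2 char_one[OF sep ch]) (simp add: c_def)
    have cg: "continuous_on UNIV (\<lambda>y. f y + (- c) * 1)"
      by (intro continuous_intros f(1))
    have "f x + (- c) * 1 \<noteq> 0" using f(2) c_def by simp
    then show "\<exists>g. continuous_on UNIV g \<and> \<omega> (embed0 g) = 0 \<and> g x \<noteq> 0"
      using z cg by blast
  qed
  from choice[OF this] obtain g where g0: "\<forall>x. continuous_on UNIV (g x) \<and> \<omega> (embed0 (g x)) = 0 \<and> g x x \<noteq> 0"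
    by blast
  then have g: "\<And>x. continuous_on UNIV (g x)" "\<And>x. \<omega> (embed0 (g x)) = 0" "\<And>x. g x x \<noteq> 0"
    by auto
  have o: "\<And>x. x \<in> UNIV \<Longrightarrow> open {y. g x y \<noteq> 0}"
    using g(1) by (simp add: open_nz)
  have u: "UNIV \<subseteq> (\<Union>x\<in>UNIV. {y. g x y \<noteq> 0})" using g(3) by auto
  obtain T where T: "finite T" "UNIV \<subseteq> (\<Union>x\<in>T. {y. g x y \<noteq> 0})"
    by (rule compactE_image[OF cpt o u]) blast
  define h where "h y = (\<Sum>x\<in>T. g x y * cnj (g x y))" for y
  have hc: "continuous_on UNIV h" unfolding h_def using g(1) T(1)
    by (intro continuous_intros) auto
  have "\<omega> (embed0 h) = (\<Sum>x\<in>T. \<omega> (embed0 (\<lambda>y. g x y * cnj (g x y))))"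
    unfolding h_def using T(1) g(1) by (intro ce_sum) (auto intro!: continuous_intros)
  also have "\<dots> = 0"
  proof (intro sum.neutral ballI)
    fix x
    have cj: "continuous_on UNIV (\<lambda>y. cnj (g x y))" by (intro continuous_intros g(1))
    show "\<omega> (embed0 (\<lambda>y. g x y * cnj (g x y))) = 0" using ce_mult[OF g(1) cj] g(2) by simp
  qed
  finally have h0: "\<omega> (embed0 h) = 0" .
  have hnz: "h y \<noteq> 0" for y
  proof -
    obtain x where x: "x \<in> T" "g x y \<noteq> 0" using T(2) by auto
    have "h y = complex_of_real (\<Sum>x\<in>T. (cmod (g x y))\<^sup>2)"
      unfolding h_def of_real_sum by (intro sum.cong refl) (metis complex_norm_square)
    moreover have "(\<Sum>x\<in>T. (cmod (g x y))\<^sup>2) > 0"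
      using x T(1) by (intro sum_pos2[of T x]) auto
    ultimately show ?thesis by (metis less_irrefl of_real_eq_0_iff)
  qed
  have hi: "continuous_on UNIV (\<lambda>y. 1 / h y)"
    using hc hnz by (intro continuous_intros) auto
  have "\<omega> (embed0 (\<lambda>y. h y * (1 / h y))) = 0"
    using ce_mult[OF hc hi] h0 by simp
  moreover have "(\<lambda>y. h y * (1 / h y)) = (\<lambda>y. 1)" using hnz by auto
  ultimately show False using char_one[OF sep ch] by simp
qed

end

lemma cont_sqrt_quot:
  fixes \<psi> :: "'a::t2_space \<Rightarrow> complex"
  assumes "continuous_on UNIV \<psi>"
  shows "continuous_on UNIV (\<lambda>y. \<psi> y / complex_of_real (sqrt (cmod (\<psi> y))))"
proof -
  let ?g = "\<lambda>y. complex_of_real (sqrt (cmod (\<psi> y)))"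
  let ?h = "\<lambda>y. \<psi> y / ?g y"
  have pc: "isCont \<psi> z" for z using assms continuous_on_eq_continuous_at[OF open_UNIV] by blast
  have "isCont ?h z" for z
  proof (cases "\<psi> z = 0")
    case False
    have "isCont ?g z" using pc by (intro continuous_intros)
    moreover have "?g z \<noteq> 0" using False by simp
    ultimately show ?thesis using pc by (intro continuous_intros) auto
  next
    case True
    have nh: "norm (?h y) = sqrt (cmod (\<psi> y))" for y
    proof (cases "\<psi> y = 0")
      case False
      have "cmod (\<psi> y) = sqrt (cmod (\<psi> y)) * sqrt (cmod (\<psi> y))" by simp
      then show ?thesis using False by (simp add: norm_divide field_simps)
    qed simp
    have "((\<lambda>y. sqrt (cmod (\<psi> y))) \<longlongrightarrow> sqrt (cmod (\<psi> z))) (at z)"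
      using pc unfolding isCont_def by (intro tendsto_intros)
    then have "((\<lambda>y. norm (?h y)) \<longlongrightarrow> 0) (at z)" using True nh by simp
    then have "(?h \<longlongrightarrow> 0) (at z)" by (rule tendsto_norm_zero_cancel)
    then show ?thesis using True unfolding isCont_def by simp
  qed
  then show ?thesis using continuous_on_eq_continuous_at[OF open_UNIV] by blast
qed

lemma cmult_embed0_mono: "cmult \<sigma> (embed0 f) (monoF k u) = monoF k (\<lambda>y. f y * u y)"
  unfolding embed0_mono by (rule ext, rule ext, subst cmult_mono_left) (simp add: monoF_def)

lemma cmult_mono_mono: "cmult \<sigma> (monoF k u) (monoF l v) = monoF (k + l) (\<lambda>y. u y * v (zpow \<sigma> (-k) y))"
  by (rule ext, rule ext, subst cmult_mono_left) (auto simp: monoF_def)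

lemma char_vanish:
  fixes \<sigma> :: "'a::t2_space \<Rightarrow> 'a"
  assumes sep: "sepd TYPE('a)" and ch: "is_character \<sigma> \<omega>"
    and pt: "\<forall>f. continuous_on UNIV f \<longrightarrow> \<omega> (embed0 f) = f x"
    and m: "monoF k \<psi> \<in> commutant00 \<sigma>" and z: "\<psi> x = 0"
  shows "\<omega> (monoF k \<psi>) = 0"
proof -
  have pc: "continuous_on UNIV \<psi>" and pf: "\<And>y. \<psi> y \<noteq> 0 \<Longrightarrow> zpow \<sigma> (-k) y = y"
    using m mono_comm[OF sep] by auto
  define g where "g y = complex_of_real (sqrt (cmod (\<psi> y)))" for y
  define h where "h y = \<psi> y / g y" for y
  have gc: "continuous_on UNIV g" unfolding g_def using pc by (intro continuous_intros)
  have hc: "continuous_on UNIV h" unfolding h_def g_def by (rule cont_sqrt_quot[OF pc])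
  have hm: "monoF k h \<in> commutant00 \<sigma>"
    unfolding mono_comm[OF sep] using hc pf by (auto simp: h_def)
  have gh: "(\<lambda>y. g y * h y) = \<psi>"
  proof
    fix y show "g y * h y = \<psi> y"
      by (cases "\<psi> y = 0") (auto simp: g_def h_def)
  qed
  have "\<omega> (monoF k \<psi>) = \<omega> (cmult \<sigma> (embed0 g) (monoF k h))"
    unfolding cmult_embed0_mono gh ..
  also have "\<dots> = \<omega> (embed0 g) * \<omega> (monoF k h)"
    by (rule char_mult[OF ch embed0_comm[OF sep gc] hm])
  also have "\<omega> (embed0 g) = 0" using pt gc z by (simp add: g_def)
  finally show ?thesis by simp
qed

lemma comm_interior:
  fixes F :: "int \<Rightarrow> 'a::topological_space \<Rightarrow> complex"
  assumes sep: "sepd TYPE('a)" and b: "bij \<sigma>" and F: "F \<in> commutant00 \<sigma>" and nz: "F k x \<noteq> 0"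
  shows "x \<in> interior (Fix \<sigma> (nat \<bar>k\<bar>))"
proof -
  have "open {y. F k y \<noteq> 0}" by (rule open_nz[OF comm_cont[OF F]])
  moreover have "{y. F k y \<noteq> 0} \<subseteq> Fix \<sigma> (nat \<bar>k\<bar>)"
    using comm_fix[OF sep F] zpow_fix_iff[OF b] unfolding Fix_def by blast
  ultimately have "{y. F k y \<noteq> 0} \<subseteq> interior (Fix \<sigma> (nat \<bar>k\<bar>))" using interior_maximal by blast
  then show ?thesis using nz by blast
qed

lemma comm_Uper:
  fixes F :: "int \<Rightarrow> 'a::topological_space \<Rightarrow> complex"
  assumes sep: "sepd TYPE('a)" and b: "bij \<sigma>" and F: "F \<in> commutant00 \<sigma>" and nz: "F k x \<noteq> 0"
    and k: "k \<noteq> 0"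
  shows "x \<in> Uper \<sigma>"
  using comm_interior[OF assms(1-4)] k unfolding Uper_def by force

lemma omega1_char:
  fixes \<sigma> :: "'a::topological_space \<Rightarrow> 'a"
  assumes sep: "sepd TYPE('a)" and b: "bij \<sigma>" and x: "x \<notin> Uper \<sigma>"
  shows "is_character \<sigma> (omega1 x)"
proof -
  have mul: "omega1 x (cmult \<sigma> F G) = omega1 x F * omega1 x G"
    if F: "F \<in> commutant00 \<sigma>" and G: "G \<in> commutant00 \<sigma>" for F G
  proof -
    have "cmult \<sigma> F G 0 x = (\<Sum>k\<in>suppF F. F k x * G (0 - k) (zpow \<sigma> (-k) x))"
      unfolding cmult_def suppF_def ..
    also have "\<dots> = (\<Sum>k\<in>suppF F. if k = 0 then F 0 x * G 0 x else 0)"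
      using comm_Uper[OF sep b F _ _] x by (intro sum.cong) auto
    also have "\<dots> = F 0 x * G 0 x"
      using c00_finite[OF comm_c00[OF F]] by (auto simp: sum.delta suppF_def)
    finally show ?thesis unfolding omega1_def .
  qed
  have c1: "continuous_on UNIV (\<lambda>y::'a. 1::complex)" by simp
  show ?thesis unfolding is_character_def
    using mul embed0_comm[OF sep c1, of \<sigma>]
    by (auto simp: omega1_def embed0_def intro!: bexI[of _ "embed0 (\<lambda>y. 1)"])
qed

lemma minper_props:
  assumes "x \<in> Uper \<sigma>"
  shows "minper \<sigma> x \<ge> 1" "x \<in> interior (Fix \<sigma> (minper \<sigma> x))"
    "\<And>m. m \<ge> 1 \<Longrightarrow> x \<in> interior (Fix \<sigma> m) \<Longrightarrow> minper \<sigma> x \<le> m"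
proof -
  obtain q where q: "q \<ge> 1" "x \<in> interior (Fix \<sigma> q)" using assms unfolding Uper_def by auto
  have "1 \<le> minper \<sigma> x \<and> x \<in> interior (Fix \<sigma> (minper \<sigma> x))"
    unfolding minper_def by (rule LeastI[of _ q]) (use q in auto)
  then show "minper \<sigma> x \<ge> 1" "x \<in> interior (Fix \<sigma> (minper \<sigma> x))" by auto
  show "\<And>m. m \<ge> 1 \<Longrightarrow> x \<in> interior (Fix \<sigma> m) \<Longrightarrow> minper \<sigma> x \<le> m"
    unfolding minper_def by (rule Least_le) auto
qed

lemma minper_dvd:
  fixes \<sigma> :: "'a::topological_space \<Rightarrow> 'a"
  assumes x: "x \<in> Uper \<sigma>" and m: "m \<ge> 1" "x \<in> interior (Fix \<sigma> m)"
  shows "minper \<sigma> x dvd m"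
proof -
  let ?n = "minper \<sigma> x"
  have n: "?n \<ge> 1" "x \<in> interior (Fix \<sigma> ?n)" using minper_props[OF x] by auto
  have "Fix \<sigma> ?n \<inter> Fix \<sigma> m \<subseteq> Fix \<sigma> (gcd ?n m)"
    using Fix_gcd[where \<sigma>=\<sigma> and a="?n" and b=m] n(1) unfolding Fix_def by auto
  then have "interior (Fix \<sigma> ?n \<inter> Fix \<sigma> m) \<subseteq> interior (Fix \<sigma> (gcd ?n m))" by (rule interior_mono)
  then have "x \<in> interior (Fix \<sigma> (gcd ?n m))" using n(2) m(2) by auto
  moreover have "gcd ?n m \<ge> 1" using n(1) by (simp add: Suc_le_eq)
  ultimately have "?n \<le> gcd ?n m" using minper_props(3)[OF x] by blast
  moreover have "gcd ?n m \<le> ?n" using n(1) by (simp add: gcd_le1_nat)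
  ultimately have "gcd ?n m = ?n" by simp
  then show ?thesis by (metis gcd_dvd2)
qed

lemma comm_dvd:
  fixes F :: "int \<Rightarrow> 'a::topological_space \<Rightarrow> complex"
  assumes sep: "sepd TYPE('a)" and b: "bij \<sigma>" and F: "F \<in> commutant00 \<sigma>" and nz: "F k x \<noteq> 0"
    and x: "x \<in> Uper \<sigma>"
  shows "int (minper \<sigma> x) dvd k"
proof (cases "k = 0")
  case False
  have "minper \<sigma> x dvd nat \<bar>k\<bar>"
    using minper_dvd[OF x _ comm_interior[OF sep b F nz]] False by simp
  then have "int (minper \<sigma> x) dvd int (nat \<bar>k\<bar>)" by (simp only: of_nat_dvd_iff)
  then show ?thesis by simp
qed simp

lemma comm_cmult:
  fixes F G :: "int \<Rightarrow> 'a::topological_space \<Rightarrow> complex"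
  assumes sep: "sepd TYPE('a)" and F: "F \<in> commutant00 \<sigma>"
  shows "cmult \<sigma> F G = (\<lambda>m y. \<Sum>k\<in>suppF F. F k y * G (m - k) y)"
  unfolding cmult_def suppF_def[symmetric]
  by (intro ext sum.cong refl) (metis comm_fix[OF sep F] mult_zero_left)

lemma c00_scal: "F \<in> c00 \<Longrightarrow> (\<lambda>k x. a * F k x) \<in> c00"
proof -
  assume F: "F \<in> c00"
  have "{k. (\<lambda>x. a * F k x) \<noteq> (\<lambda>x. 0)} \<subseteq> suppF F" unfolding suppF_def by auto
  then have "finite {k. (\<lambda>x. a * F k x) \<noteq> (\<lambda>x. 0)}" using c00_finite[OF F] by (rule finite_subset)
  moreover have "continuous_on UNIV (\<lambda>x. a * F k x)" for k
    using F unfolding c00_def by (intro continuous_intros) auto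
  ultimately show ?thesis unfolding c00_def by blast
qed

lemma comm_cmult_c00:
  fixes F G :: "int \<Rightarrow> 'a::topological_space \<Rightarrow> complex"
  assumes sep: "sepd TYPE('a)" and F: "F \<in> commutant00 \<sigma>" and G: "G \<in> commutant00 \<sigma>"
  shows "cmult \<sigma> F G \<in> c00"
proof -
  have fF: "finite (suppF F)" and fG: "finite (suppF G)"
    using c00_finite comm_c00 F G by blast+
  have "{m. cmult \<sigma> F G m \<noteq> (\<lambda>y. 0)} \<subseteq> (\<lambda>(a, b). a + b) ` (suppF F \<times> suppF G)"
  proof
    fix m assume "m \<in> {m. cmult \<sigma> F G m \<noteq> (\<lambda>y. 0)}"
    then obtain y where "(\<Sum>k\<in>suppF F. F k y * G (m - k) y) \<noteq> 0"
      unfolding comm_cmult[OF sep F] by auto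
    then obtain k where k: "k \<in> suppF F" "G (m - k) y \<noteq> 0"
      by (metis (mono_tags, lifting) mult_zero_right sum.neutral)
    then have "m - k \<in> suppF G" unfolding suppF_def by auto
    then show "m \<in> (\<lambda>(a, b). a + b) ` (suppF F \<times> suppF G)"
      using k(1) by (intro image_eqI[of _ _ "(k, m - k)"]) auto
  qed
  then have "finite {m. cmult \<sigma> F G m \<noteq> (\<lambda>y. 0)}"
    by (rule finite_subset) (use fF fG in auto)
  moreover have "continuous_on UNIV (cmult \<sigma> F G m)" for m
    unfolding comm_cmult[OF sep F] using comm_cont[OF F] comm_cont[OF G] fF
    by (intro continuous_intros) auto
  ultimately show ?thesis unfolding c00_def by blast
qed

lemma inj_mult_int: "(n::nat) \<ge> 1 \<Longrightarrow> inj (\<lambda>j::int. j * int n)"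
  by (rule injI) simp

lemma o2_finite:
  assumes "F \<in> c00" "(n::nat) \<ge> 1"
  shows "finite {j. F (j * int n) \<noteq> (\<lambda>y. 0)}"
proof -
  have "{j. F (j * int n) \<noteq> (\<lambda>y. 0)} = (\<lambda>j. j * int n) -` suppF F" unfolding suppF_def by auto
  then show ?thesis using finite_vimageI[OF c00_finite[OF assms(1)] inj_mult_int[OF assms(2)]] by simp
qed

lemma o2_eq:
  assumes x: "x \<in> Uper \<sigma>" and F: "F \<in> c00" and T: "finite T"
    and z: "\<forall>j. j \<notin> T \<longrightarrow> F (j * int (minper \<sigma> x)) x = 0"
  shows "omega2 \<sigma> x c F = (\<Sum>j\<in>T. F (j * int (minper \<sigma> x)) x * c powi j)"
proof -
  let ?n = "minper \<sigma> x"
  let ?A = "{j. F (j * int ?n) \<noteq> (\<lambda>y. 0)}"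
  have fA: "finite ?A" by (rule o2_finite[OF F minper_props(1)[OF x]])
  have "omega2 \<sigma> x c F = (\<Sum>j\<in>?A. F (j * int ?n) x * c powi j)" unfolding omega2_def ..
  also have "\<dots> = (\<Sum>j\<in>?A \<union> T. F (j * int ?n) x * c powi j)"
    by (rule sum.mono_neutral_left) (use fA T in auto)
  also have "\<dots> = (\<Sum>j\<in>T. F (j * int ?n) x * c powi j)"
    by (rule sum.mono_neutral_right) (use fA T z in auto)
  finally show ?thesis .
qed

lemma cmult_at_multiple:
  fixes F G :: "int \<Rightarrow> 'a::topological_space \<Rightarrow> complex"
  assumes sep: "sepd TYPE('a)" and b: "bij \<sigma>" and F: "F \<in> commutant00 \<sigma>" and x: "x \<in> Uper \<sigma>"
  shows "cmult \<sigma> F G (m * int (minper \<sigma> x)) x =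
    (\<Sum>i\<in>{i. F (i * int (minper \<sigma> x)) \<noteq> (\<lambda>y. 0)}. F (i * int (minper \<sigma> x)) x * G ((m - i) * int (minper \<sigma> x)) x)"
proof -
  let ?n = "int (minper \<sigma> x)"
  let ?A = "{i. F (i * ?n) \<noteq> (\<lambda>y. 0)}"
  have fF: "finite (suppF F)" using c00_finite comm_c00 F by blast
  have n1: "minper \<sigma> x \<ge> 1" by (rule minper_props(1)[OF x])
  have "cmult \<sigma> F G (m * ?n) x = (\<Sum>k\<in>suppF F. F k x * G (m * ?n - k) x)"
    unfolding comm_cmult[OF sep F] ..
  also have "\<dots> = (\<Sum>k\<in>suppF F \<inter> range (\<lambda>i. i * ?n). F k x * G (m * ?n - k) x)"
  proof (rule sum.mono_neutral_right[OF fF])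
    show "suppF F \<inter> range (\<lambda>i. i * ?n) \<subseteq> suppF F" by blast
    show "\<forall>k\<in>suppF F - suppF F \<inter> range (\<lambda>i. i * ?n). F k x * G (m * ?n - k) x = 0"
    proof
      fix k assume k: "k \<in> suppF F - suppF F \<inter> range (\<lambda>i. i * ?n)"
      have "F k x = 0"
      proof (rule ccontr)
        assume "F k x \<noteq> 0"
        then have "?n dvd k" by (rule comm_dvd[OF sep b F _ x])
        then obtain i where "k = i * ?n" by (metis dvd_def mult.commute)
        then show False using k by auto
      qed
      then show "F k x * G (m * ?n - k) x = 0" by simp
    qed
  qed
  also have "suppF F \<inter> range (\<lambda>i. i * ?n) = (\<lambda>i. i * ?n) ` ?A"
    unfolding suppF_def by auto
  also have "(\<Sum>k\<in>(\<lambda>i. i * ?n) ` ?A. F k x * G (m * ?n - k) x) =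
      (\<Sum>i\<in>?A. F (i * ?n) x * G (m * ?n - i * ?n) x)"
    by (subst sum.reindex) (use inj_mult_int[OF n1] in \<open>auto simp: inj_on_def\<close>)
  also have "\<dots> = (\<Sum>i\<in>?A. F (i * ?n) x * G ((m - i) * ?n) x)"
    by (simp add: left_diff_distrib)
  finally show ?thesis .
qed

lemma omega2_char:
  fixes \<sigma> :: "'a::topological_space \<Rightarrow> 'a"
  assumes sep: "sepd TYPE('a)" and b: "bij \<sigma>" and x: "x \<in> Uper \<sigma>" and c: "c \<noteq> 0"
  shows "is_character \<sigma> (omega2 \<sigma> x c)"
proof -
  let ?n = "int (minper \<sigma> x)"
  define A where "A F = {i. F (i * ?n) \<noteq> (\<lambda>y::'a. 0::complex)}" for F
  have n1: "minper \<sigma> x \<ge> 1" by (rule minper_props(1)[OF x])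
  have fA: "finite (A F)" if "F \<in> commutant00 \<sigma>" for F
    unfolding A_def by (rule o2_finite[OF comm_c00[OF that] n1])
  have o2A: "omega2 \<sigma> x c F = (\<Sum>j\<in>A F. F (j * ?n) x * c powi j)" for F
    unfolding omega2_def A_def ..
  have zA: "F (j * ?n) x = 0" if "j \<notin> A F" for F j
    using that unfolding A_def by auto
  have add: "omega2 \<sigma> x c (\<lambda>k y. F k y + G k y) = omega2 \<sigma> x c F + omega2 \<sigma> x c G"
    if F: "F \<in> commutant00 \<sigma>" and G: "G \<in> commutant00 \<sigma>" for F G
  proof -
    have T: "finite (A F \<union> A G)" using fA F G by blast
    have "omega2 \<sigma> x c (\<lambda>k y. F k y + G k y) = (\<Sum>j\<in>A F \<union> A G. (F (j * ?n) x + G (j * ?n) x) * c powi j)"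
      by (rule o2_eq[OF x comm_c00[OF comm_add[OF sep F G]] T]) (auto simp: zA)
    also have "\<dots> = (\<Sum>j\<in>A F \<union> A G. F (j * ?n) x * c powi j) + (\<Sum>j\<in>A F \<union> A G. G (j * ?n) x * c powi j)"
      by (simp add: distrib_right sum.distrib)
    also have "\<dots> = omega2 \<sigma> x c F + omega2 \<sigma> x c G"
      using o2_eq[OF x comm_c00[OF F] T, of c] o2_eq[OF x comm_c00[OF G] T, of c] zA by auto
    finally show ?thesis .
  qed
  have scal: "omega2 \<sigma> x c (\<lambda>k y. a * F k y) = a * omega2 \<sigma> x c F"
    if F: "F \<in> commutant00 \<sigma>" for F a
  proof -
    have "omega2 \<sigma> x c (\<lambda>k y. a * F k y) = (\<Sum>j\<in>A F. (a * F (j * ?n) x) * c powi j)"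
      by (rule o2_eq[OF x c00_scal[OF comm_c00[OF F]] fA[OF F]]) (auto simp: zA)
    also have "\<dots> = a * (\<Sum>j\<in>A F. F (j * ?n) x * c powi j)"
      by (simp add: sum_distrib_left mult.assoc)
    finally show ?thesis unfolding o2A .
  qed
  have mul: "omega2 \<sigma> x c (cmult \<sigma> F G) = omega2 \<sigma> x c F * omega2 \<sigma> x c G"
    if F: "F \<in> commutant00 \<sigma>" and G: "G \<in> commutant00 \<sigma>" for F G
  proof -
    define M where "M = (\<lambda>(i, j). i + j) ` (A F \<times> A G)"
    have fM: "finite M" unfolding M_def using fA F G by blast
    have cm: "cmult \<sigma> F G (m * ?n) x = (\<Sum>i\<in>A F. F (i * ?n) x * G ((m - i) * ?n) x)" for m
      unfolding A_def by (rule cmult_at_multiple[OF sep b F x])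
    have "omega2 \<sigma> x c (cmult \<sigma> F G) = (\<Sum>m\<in>M. cmult \<sigma> F G (m * ?n) x * c powi m)"
    proof (rule o2_eq[OF x comm_cmult_c00[OF sep F G] fM], intro allI impI)
      fix m assume m: "m \<notin> M"
      have "G ((m - i) * ?n) x = 0" if "i \<in> A F" for i
      proof -
        have "m - i \<notin> A G"
        proof
          assume "m - i \<in> A G"
          then have "m \<in> M" unfolding M_def using that by (intro image_eqI[of _ _ "(i, m - i)"]) auto
          then show False using m by simp
        qed
        then show ?thesis by (rule zA)
      qed
      then show "cmult \<sigma> F G (m * ?n) x = 0" unfolding cm by simp
    qed
    also have "\<dots> = (\<Sum>m\<in>M. \<Sum>i\<in>A F. F (i * ?n) x * (G ((m - i) * ?n) x * c powi m))"
      unfolding cm by (simp add: sum_distrib_right mult.assoc)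
    also have "\<dots> = (\<Sum>i\<in>A F. F (i * ?n) x * (\<Sum>m\<in>M. G ((m - i) * ?n) x * c powi m))"
      by (subst sum.swap) (simp add: sum_distrib_left)
    also have "\<dots> = (\<Sum>i\<in>A F. F (i * ?n) x * (c powi i * omega2 \<sigma> x c G))"
    proof (rule sum.cong[OF refl])
      fix i assume i: "i \<in> A F"
      let ?T = "(\<lambda>m. m - i) ` M"
      have "(\<Sum>m\<in>M. G ((m - i) * ?n) x * c powi m) = (\<Sum>j\<in>?T. G (j * ?n) x * c powi (j + i))"
        by (subst sum.reindex) (auto simp: inj_on_def)
      also have "\<dots> = c powi i * (\<Sum>j\<in>?T. G (j * ?n) x * c powi j)"
        using c by (simp add: sum_distrib_left power_int_add algebra_simps)
      also have "(\<Sum>j\<in>?T. G (j * ?n) x * c powi j) = omega2 \<sigma> x c G"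
      proof (rule o2_eq[OF x comm_c00[OF G], symmetric])
        show "finite ?T" using fM by blast
        show "\<forall>j. j \<notin> ?T \<longrightarrow> G (j * ?n) x = 0"
        proof (intro allI impI)
          fix j assume j: "j \<notin> ?T"
          have "j \<notin> A G"
          proof
            assume "j \<in> A G"
            then have "i + j \<in> M" unfolding M_def using i by auto
            then have "j \<in> ?T" by (intro image_eqI[of _ _ "i + j"]) auto
            then show False using j by simp
          qed
          then show "G (j * ?n) x = 0" by (rule zA)
        qed
      qed
      finally show "F (i * ?n) x * (\<Sum>m\<in>M. G ((m - i) * ?n) x * c powi m) =
          F (i * ?n) x * (c powi i * omega2 \<sigma> x c G)" by simp
    qed
    also have "\<dots> = omega2 \<sigma> x c F * omega2 \<sigma> x c G"
      unfolding o2A[of F] by (simp add: sum_distrib_right mult.assoc)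
    finally show ?thesis .
  qed
  have c1: "continuous_on UNIV (\<lambda>y::'a. 1::complex)" by simp
  have one: "omega2 \<sigma> x c (embed0 (\<lambda>y. 1)) = 1"
  proof -
    have "omega2 \<sigma> x c (embed0 (\<lambda>y. 1)) = (\<Sum>j\<in>{0}. embed0 (\<lambda>y. 1) (j * ?n) x * c powi j)"
      by (rule o2_eq[OF x comm_c00[OF embed0_comm[OF sep c1]]]) (use n1 in \<open>auto simp: embed0_def\<close>)
    then show ?thesis by (simp add: embed0_def)
  qed
  show ?thesis unfolding is_character_def
    using add scal mul one embed0_comm[OF sep c1, of \<sigma>] by force
qed

lemma phi_exists:
  fixes \<sigma> :: "'a::t2_space \<Rightarrow> 'a"
  assumes cpt: "compact (UNIV :: 'a set)" and x: "x \<in> Uper \<sigma>"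
  shows "\<exists>\<phi>::'a\<Rightarrow>complex. continuous_on UNIV \<phi> \<and> \<phi> x = 1 \<and> (\<forall>y. \<phi> y \<noteq> 0 \<longrightarrow> (\<sigma> ^^ minper \<sigma> x) y = y)"
proof -
  have "x \<in> interior (Fix \<sigma> (minper \<sigma> x))" by (rule minper_props(2)[OF x])
  then obtain \<phi> :: "'a \<Rightarrow> complex" where \<phi>: "continuous_on UNIV \<phi>" "\<phi> x = 1"
      "\<forall>y. y \<notin> interior (Fix \<sigma> (minper \<sigma> x)) \<longrightarrow> \<phi> y = 0"
    using urysohn_pt[OF cpt open_interior] by blast
  have "\<phi> y \<noteq> 0 \<Longrightarrow> (\<sigma> ^^ minper \<sigma> x) y = y" for y
    using \<phi>(3) interior_subset[of "Fix \<sigma> (minper \<sigma> x)"] unfolding Fix_def by blast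
  then show ?thesis using \<phi> by blast
qed

lemma fix_multiple:
  fixes \<sigma> :: "'a \<Rightarrow> 'a"
  assumes b: "bij \<sigma>" and h: "(\<sigma> ^^ n) y = y"
  shows "zpow \<sigma> (-(k * int n)) y = y"
proof -
  have "nat \<bar>k * int n\<bar> = n * nat \<bar>k\<bar>" by (simp add: abs_mult nat_mult_distrib)
  then show ?thesis unfolding zpow_fix_iff[OF b] using funpow_fix_mult[OF h] by simp
qed

lemma o2_embed0:
  assumes x: "x \<in> Uper \<sigma>" and f: "continuous_on UNIV f"
  shows "omega2 \<sigma> x c (embed0 f) = f x"
proof -
  have n1: "minper \<sigma> x \<ge> 1" by (rule minper_props(1)[OF x])
  have "omega2 \<sigma> x c (embed0 f) = (\<Sum>j\<in>{0}. embed0 f (j * int (minper \<sigma> x)) x * c powi j)"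
  proof (rule o2_eq[OF x])
    show "embed0 f \<in> c00" unfolding embed0_mono mono_c00 by (rule f)
    show "\<forall>j. j \<notin> {0} \<longrightarrow> embed0 f (j * int (minper \<sigma> x)) x = 0"
      using n1 by (auto simp: embed0_def)
  qed simp
  then show ?thesis by (simp add: embed0_def)
qed

lemma o2_monon:
  assumes x: "x \<in> Uper \<sigma>" and f: "continuous_on UNIV f"
  shows "omega2 \<sigma> x c (monoF (int (minper \<sigma> x)) f) = f x * c"
proof -
  have n1: "minper \<sigma> x \<ge> 1" by (rule minper_props(1)[OF x])
  have "omega2 \<sigma> x c (monoF (int (minper \<sigma> x)) f) = (\<Sum>j\<in>{1}. monoF (int (minper \<sigma> x)) f (j * int (minper \<sigma> x)) x * c powi j)"
  proof (rule o2_eq[OF x])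
    show "monoF (int (minper \<sigma> x)) f \<in> c00" unfolding mono_c00 by (rule f)
    show "\<forall>j. j \<notin> {1} \<longrightarrow> monoF (int (minper \<sigma> x)) f (j * int (minper \<sigma> x)) x = 0"
      using n1 by (auto simp: monoF_def)
  qed simp
  then show ?thesis by (simp add: monoF_def)
qed

lemma classify:
  fixes \<sigma> :: "'a::t2_space \<Rightarrow> 'a"
  assumes cpt: "compact (UNIV :: 'a set)" and b: "bij \<sigma>" and ch: "is_character \<sigma> \<omega>"
  shows "(\<exists>x. x \<notin> Uper \<sigma> \<and> (\<forall>F\<in>commutant00 \<sigma>. \<omega> F = omega1 x F))
       \<or> (\<exists>x c. x \<in> Uper \<sigma> \<and> c \<noteq> 0 \<and> (\<forall>F\<in>commutant00 \<sigma>. \<omega> F = omega2 \<sigma> x c F))"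
proof -
  have sep: "sepd TYPE('a)" by (rule sepd_compact[OF cpt])
  obtain x where pt: "\<forall>f. continuous_on UNIV f \<longrightarrow> \<omega> (embed0 f) = f x"
    using char_point[OF sep ch cpt] by blast
  show ?thesis
  proof (cases "x \<in> Uper \<sigma>")
    case False
    have "\<omega> F = omega1 x F" if F: "F \<in> commutant00 \<sigma>" for F
    proof -
      have "\<omega> F = (\<Sum>k\<in>suppF F. \<omega> (monoF k (F k)))" by (rule char_decomp[OF sep ch F])
      also have "\<dots> = (\<Sum>k\<in>suppF F. if k = 0 then F 0 x else 0)"
      proof (rule sum.cong[OF refl])
        fix k assume "k \<in> suppF F"
        show "\<omega> (monoF k (F k)) = (if k = 0 then F 0 x else 0)"
        proof (cases "k = 0")
          case True
          then show ?thesis using pt comm_cont[OF F] by (simp add: embed0_mono[symmetric])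
        next
          case k0: False
          have "F k x = 0" using comm_Uper[OF sep b F _ k0] False by blast
          then show ?thesis using char_vanish[OF sep ch pt comm_mono_part[OF sep F]] k0 by simp
        qed
      qed
      also have "\<dots> = F 0 x" using c00_finite[OF comm_c00[OF F]] by (auto simp: sum.delta suppF_def)
      finally show ?thesis unfolding omega1_def .
    qed
    then show ?thesis using False by blast
  next
    case True
    let ?n = "int (minper \<sigma> x)"
    have n1: "minper \<sigma> x \<ge> 1" by (rule minper_props(1)[OF True])
    then have npos: "?n > 0" by simp
    obtain \<phi> :: "'a \<Rightarrow> complex" where \<phi>: "continuous_on UNIV \<phi>" "\<phi> x = 1"
      "\<forall>y. \<phi> y \<noteq> 0 \<longrightarrow> (\<sigma> ^^ minper \<sigma> x) y = y"
      using phi_exists[OF cpt True] by blast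
    have fixm: "zpow \<sigma> (-(k * ?n)) y = y" if "\<phi> y \<noteq> 0" for y k
      by (rule fix_multiple[OF b]) (use \<phi>(3) that in auto)
    have fixp: "zpow \<sigma> (-(int j * ?n)) y = y" if "\<phi> y ^ j \<noteq> 0" for y j
    proof (cases "j = 0")
      case False then show ?thesis using that fixm by simp
    qed simp
    have fixq: "zpow \<sigma> (-(-(int j * ?n))) y = y" if "\<phi> y ^ j \<noteq> 0" for y j
    proof (cases "j = 0")
      case False then show ?thesis using that fixm[of y "- int j"] by simp
    qed simp
    define pw where "pw j = monoF (int j * ?n) (\<lambda>y. \<phi> y ^ j)" for j :: nat
    define qw where "qw j = monoF (-(int j * ?n)) (\<lambda>y. \<phi> y ^ j)" for j :: nat
    have pwC: "pw j \<in> commutant00 \<sigma>" for j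
      unfolding pw_def mono_comm[OF sep] using \<phi>(1) fixp by (auto intro!: continuous_intros)
    have qwC: "qw j \<in> commutant00 \<sigma>" for j
      unfolding qw_def mono_comm[OF sep] using \<phi>(1) fixq by (auto intro!: continuous_intros)
    have pow_step: "(\<lambda>y. \<phi> y ^ j * \<phi> (zpow \<sigma> (-k) y) ^ 1) = (\<lambda>y. \<phi> y ^ Suc j)"
      if "k = int j * ?n \<or> k = -(int j * ?n)" for j k
    proof
      fix y
      show "\<phi> y ^ j * \<phi> (zpow \<sigma> (-k) y) ^ 1 = \<phi> y ^ Suc j"
      proof (cases "\<phi> y = 0")
        case True
        then show ?thesis by (cases "j = 0") (use that in auto)
      next
        case False
        then have "zpow \<sigma> (-k) y = y" using that fixm[of y "int j"] fixm[of y "- int j"] by auto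
        then show ?thesis by simp
      qed
    qed
    define c where "c = \<omega> (pw 1)"
    define c' where "c' = \<omega> (qw 1)"
    have pw0: "pw 0 = embed0 (\<lambda>y. 1)" and qw0: "qw 0 = embed0 (\<lambda>y. 1)"
      unfolding pw_def qw_def embed0_mono by simp_all
    have pwv: "\<omega> (pw j) = c ^ j" for j
    proof (induction j)
      case 0 then show ?case unfolding pw0 using char_one[OF sep ch] by simp
    next
      case (Suc j)
      have "cmult \<sigma> (pw j) (pw 1) = pw (Suc j)"
        unfolding pw_def cmult_mono_mono pow_step[OF disjI1[OF refl]]
        by (simp add: algebra_simps)
      then show ?case using char_mult[OF ch pwC pwC, of j 1] Suc c_def by simp
    qed
    have qwv: "\<omega> (qw j) = c' ^ j" for j
    proof (induction j)
      case 0 then show ?case unfolding qw0 using char_one[OF sep ch] by simp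
    next
      case (Suc j)
      have "cmult \<sigma> (qw j) (qw 1) = qw (Suc j)"
        unfolding qw_def cmult_mono_mono pow_step[OF disjI2[OF refl]]
        by (simp add: algebra_simps)
      then show ?case using char_mult[OF ch qwC qwC, of j 1] Suc c'_def by simp
    qed
    have "cmult \<sigma> (pw 1) (qw 1) = embed0 (\<lambda>y. \<phi> y * \<phi> y)"
    proof -
      have "(\<lambda>y. \<phi> y ^ 1 * \<phi> (zpow \<sigma> (-(int 1 * ?n)) y) ^ 1) = (\<lambda>y. \<phi> y * \<phi> y)"
      proof
        fix y show "\<phi> y ^ 1 * \<phi> (zpow \<sigma> (-(int 1 * ?n)) y) ^ 1 = \<phi> y * \<phi> y"
          using fixm[of y 1] by (cases "\<phi> y = 0") auto
      qed
      then show ?thesis unfolding pw_def qw_def cmult_mono_mono embed0_mono by simp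
    qed
    then have "c * c' = 1"
      using char_mult[OF ch pwC qwC, of 1 1] pt \<phi>(1,2) c_def c'_def
      by (simp add: continuous_on_mult)
    then have c0: "c \<noteq> 0" and c'i: "c' = inverse c"
      by (auto dest: inverse_unique)
    have key: "\<omega> (monoF k (F k)) = (if ?n dvd k then F k x * c powi (k div ?n) else 0)"
      if F: "F \<in> commutant00 \<sigma>" for F k
    proof (cases "F k x = 0")
      case True
      then show ?thesis using char_vanish[OF sep ch pt comm_mono_part[OF sep F]] by simp
    next
      case False
      have dv: "?n dvd k" by (rule comm_dvd[OF sep b F False True])
      then obtain j where kj: "k = j * ?n" by (metis dvd_def mult.commute)
      have kd: "k div ?n = j" using kj npos by simp
      have mulpw: "\<omega> (monoF k (F k)) = F k x * \<omega> (monoF k (\<lambda>y. \<phi> y ^ J))"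
        if mC: "monoF k (\<lambda>y. \<phi> y ^ J) \<in> commutant00 \<sigma>" for J
      proof -
        have cJ: "continuous_on UNIV (\<lambda>y. \<phi> y ^ J)" using \<phi>(1) by (intro continuous_intros)
        have e1: "\<omega> (embed0 (\<lambda>y. \<phi> y ^ J)) = 1" using pt cJ \<phi>(2) by simp
        have eq: "cmult \<sigma> (monoF k (F k)) (embed0 (\<lambda>y. \<phi> y ^ J)) = cmult \<sigma> (embed0 (F k)) (monoF k (\<lambda>y. \<phi> y ^ J))"
        proof -
          have "(\<lambda>y. F k y * \<phi> (zpow \<sigma> (-k) y) ^ J) = (\<lambda>y. F k y * \<phi> y ^ J)"
          proof
            fix y show "F k y * \<phi> (zpow \<sigma> (-k) y) ^ J = F k y * \<phi> y ^ J"
              using comm_fix[OF sep F, of k y] by (cases "F k y = 0") auto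
          qed
          then show ?thesis unfolding embed0_mono cmult_mono_mono cmult_embed0_mono[unfolded embed0_mono]
            by simp
        qed
        have "\<omega> (monoF k (F k)) = \<omega> (monoF k (F k)) * \<omega> (embed0 (\<lambda>y. \<phi> y ^ J))" using e1 by simp
        also have "\<dots> = \<omega> (cmult \<sigma> (monoF k (F k)) (embed0 (\<lambda>y. \<phi> y ^ J)))"
          by (rule char_mult[OF ch comm_mono_part[OF sep F] embed0_comm[OF sep cJ], symmetric])
        also have "\<dots> = \<omega> (embed0 (F k)) * \<omega> (monoF k (\<lambda>y. \<phi> y ^ J))"
          unfolding eq by (rule char_mult[OF ch embed0_comm[OF sep comm_cont[OF F]] mC])
        also have "\<omega> (embed0 (F k)) = F k x" using pt comm_cont[OF F] by simp
        finally show ?thesis .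
      qed
      show ?thesis
      proof (cases "j \<ge> 0")
        case True
        have "monoF k (\<lambda>y. \<phi> y ^ nat j) = pw (nat j)" unfolding pw_def kj using True by simp
        then have "\<omega> (monoF k (F k)) = F k x * c ^ nat j" using mulpw[of "nat j"] pwC pwv by simp
        then show ?thesis using dv kd True by (simp add: power_int_def)
      next
        case False
        have "monoF k (\<lambda>y. \<phi> y ^ nat (-j)) = qw (nat (-j))" unfolding qw_def kj using False by simp
        then have "\<omega> (monoF k (F k)) = F k x * c' ^ nat (-j)" using mulpw[of "nat (-j)"] qwC qwv by simp
        then show ?thesis using dv kd False c'i by (simp add: power_int_def)
      qed
    qed
    have "\<omega> F = omega2 \<sigma> x c F" if F: "F \<in> commutant00 \<sigma>" for F
    proof -
      let ?A = "{j. F (j * ?n) \<noteq> (\<lambda>y. 0)}"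
      let ?g = "\<lambda>k. if ?n dvd k then F k x * c powi (k div ?n) else 0"
      have fF: "finite (suppF F)" using c00_finite comm_c00 F by blast
      have "\<omega> F = (\<Sum>k\<in>suppF F. ?g k)"
        unfolding char_decomp[OF sep ch F] using key[OF F] by simp
      also have "\<dots> = (\<Sum>k\<in>(\<lambda>j. j * ?n) ` ?A. ?g k)"
      proof (rule sum.mono_neutral_right[OF fF])
        show "(\<lambda>j. j * ?n) ` ?A \<subseteq> suppF F" unfolding suppF_def by auto
        show "\<forall>k\<in>suppF F - (\<lambda>j. j * ?n) ` ?A. ?g k = 0"
        proof
          fix k assume k: "k \<in> suppF F - (\<lambda>j. j * ?n) ` ?A"
          show "?g k = 0"
          proof (cases "?n dvd k")
            case True
            then obtain j where "k = j * ?n" by (metis dvd_def mult.commute)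
            then show ?thesis using k unfolding suppF_def by auto
          qed simp
        qed
      qed
      also have "\<dots> = (\<Sum>j\<in>?A. ?g (j * ?n))"
        by (rule sum.reindex[unfolded comp_def]) (use inj_mult_int[OF n1] in \<open>auto simp: inj_on_def\<close>)
      also have "\<dots> = (\<Sum>j\<in>?A. F (j * ?n) x * c powi j)"
        using npos by (intro sum.cong refl) simp
      finally show ?thesis unfolding omega2_def .
    qed
    then show ?thesis using True c0 by blast
  qed
qed

theorem lemma3p6:
  fixes \<sigma> \<sigma>' :: "'a::t2_space \<Rightarrow> 'a"
  assumes "compact (UNIV :: 'a set)"
    and "homeomorphism UNIV UNIV \<sigma> \<sigma>'"
  shows "(\<forall>x. x \<notin> Uper \<sigma> \<longrightarrow> is_character \<sigma> (omega1 x))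
    \<and> (\<forall>x c. x \<in> Uper \<sigma> \<and> c \<noteq> 0 \<longrightarrow> is_character \<sigma> (omega2 \<sigma> x c))
    \<and> (\<forall>\<omega>. is_character \<sigma> \<omega> \<longrightarrow>
         (\<exists>x. x \<notin> Uper \<sigma> \<and> (\<forall>F\<in>commutant00 \<sigma>. \<omega> F = omega1 x F))
       \<or> (\<exists>x c. x \<in> Uper \<sigma> \<and> c \<noteq> 0 \<and> (\<forall>F\<in>commutant00 \<sigma>. \<omega> F = omega2 \<sigma> x c F)))
    \<and> (\<forall>x y. x \<notin> Uper \<sigma> \<and> y \<notin> Uper \<sigma> \<and>
         (\<forall>F\<in>commutant00 \<sigma>. omega1 x F = omega1 y F) \<longrightarrow> x = y)
    \<and> (\<forall>x y c. x \<notin> Uper \<sigma> \<and> y \<in> Uper \<sigma> \<and> c \<noteq> 0 \<longrightarrow>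
         \<not> (\<forall>F\<in>commutant00 \<sigma>. omega1 x F = omega2 \<sigma> y c F))
    \<and> (\<forall>x y c d. x \<in> Uper \<sigma> \<and> y \<in> Uper \<sigma> \<and> c \<noteq> 0 \<and> d \<noteq> 0 \<and>
         (\<forall>F\<in>commutant00 \<sigma>. omega2 \<sigma> x c F = omega2 \<sigma> y d F) \<longrightarrow> x = y \<and> c = d)"
proof -
  have cpt: "compact (UNIV :: 'a set)" by (rule assms(1))
  have sep: "sepd TYPE('a)" by (rule sepd_compact[OF cpt])
  have b: "bij \<sigma>"
  proof -
    have h1: "\<forall>x. \<sigma>' (\<sigma> x) = x" and h2: "\<forall>y. \<sigma> (\<sigma>' y) = y"
      using assms(2) unfolding homeomorphism_def by auto
    show ?thesis unfolding bij_def inj_def surj_def using h1 h2 by metis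
  qed
  have sepf: "\<exists>f::'a\<Rightarrow>complex. continuous_on UNIV f \<and> f x \<noteq> f y" if "x \<noteq> y" for x y
    using sep that unfolding sepd_def by blast
  have p1: "\<forall>x. x \<notin> Uper \<sigma> \<longrightarrow> is_character \<sigma> (omega1 x)"
    by (intro allI impI) (rule omega1_char[OF sep b])
  have p2: "\<forall>x c. x \<in> Uper \<sigma> \<and> c \<noteq> 0 \<longrightarrow> is_character \<sigma> (omega2 \<sigma> x c)"
    by (intro allI impI) (rule omega2_char[OF sep b]; blast)
  have p3: "\<forall>\<omega>. is_character \<sigma> \<omega> \<longrightarrow>
         (\<exists>x. x \<notin> Uper \<sigma> \<and> (\<forall>F\<in>commutant00 \<sigma>. \<omega> F = omega1 x F))
       \<or> (\<exists>x c. x \<in> Uper \<sigma> \<and> c \<noteq> 0 \<and> (\<forall>F\<in>commutant00 \<sigma>. \<omega> F = omega2 \<sigma> x c F))"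
    by (intro allI impI) (rule classify[OF cpt b])
  have mC: "monoF (int (minper \<sigma> y)) \<phi> \<in> commutant00 \<sigma>"
    if \<phi>: "continuous_on UNIV \<phi>" "\<forall>z. \<phi> z \<noteq> 0 \<longrightarrow> (\<sigma> ^^ minper \<sigma> y) z = z" for \<phi> y
  proof -
    have "zpow \<sigma> (-(1 * int (minper \<sigma> y))) z = z" if "\<phi> z \<noteq> 0" for z
      by (rule fix_multiple[OF b]) (use \<phi>(2) that in blast)
    then show ?thesis unfolding mono_comm[OF sep] using \<phi>(1) by simp
  qed
  have p4: "x = y" if h: "\<forall>F\<in>commutant00 \<sigma>. omega1 x F = omega1 y F" for x y
  proof (rule ccontr)
    assume "x \<noteq> y"
    then obtain f :: "'a \<Rightarrow> complex" where f: "continuous_on UNIV f" "f x \<noteq> f y" using sepf by blast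
    have "omega1 x (embed0 f) = omega1 y (embed0 f)" using bspec[OF h embed0_comm[OF sep f(1)]] .
    then show False using f(2) unfolding omega1_def embed0_def by simp
  qed
  have p5: "\<not> (\<forall>F\<in>commutant00 \<sigma>. omega1 x F = omega2 \<sigma> y c F)"
    if y: "y \<in> Uper \<sigma>" and c: "c \<noteq> 0" for x y c
  proof
    assume h: "\<forall>F\<in>commutant00 \<sigma>. omega1 x F = omega2 \<sigma> y c F"
    obtain \<phi> :: "'a \<Rightarrow> complex" where \<phi>: "continuous_on UNIV \<phi>" "\<phi> y = 1"
      "\<forall>z. \<phi> z \<noteq> 0 \<longrightarrow> (\<sigma> ^^ minper \<sigma> y) z = z"
      using phi_exists[OF cpt y] by blast
    have n1: "minper \<sigma> y \<ge> 1" by (rule minper_props(1)[OF y])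
    have m: "monoF (int (minper \<sigma> y)) \<phi> \<in> commutant00 \<sigma>" by (rule mC[OF \<phi>(1,3)])
    have e: "omega1 x (monoF (int (minper \<sigma> y)) \<phi>) = omega2 \<sigma> y c (monoF (int (minper \<sigma> y)) \<phi>)"
      using bspec[OF h m] .
    have "omega1 x (monoF (int (minper \<sigma> y)) \<phi>) = 0" using n1 unfolding omega1_def monoF_def by simp
    moreover have "omega2 \<sigma> y c (monoF (int (minper \<sigma> y)) \<phi>) = c"
      using o2_monon[OF y \<phi>(1), of c] \<phi>(2) by simp
    ultimately show False using e c by simp
  qed
  have p6: "x = y \<and> c = d"
    if x: "x \<in> Uper \<sigma>" and y: "y \<in> Uper \<sigma>" and h: "\<forall>F\<in>commutant00 \<sigma>. omega2 \<sigma> x c F = omega2 \<sigma> y d F"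
    for x y c d
  proof -
    have xy: "x = y"
    proof (rule ccontr)
      assume "x \<noteq> y"
      then obtain f :: "'a \<Rightarrow> complex" where f: "continuous_on UNIV f" "f x \<noteq> f y" using sepf by blast
      have "omega2 \<sigma> x c (embed0 f) = omega2 \<sigma> y d (embed0 f)" using bspec[OF h embed0_comm[OF sep f(1)]] .
      then show False using f(2) o2_embed0[OF x f(1), of c] o2_embed0[OF y f(1), of d] by simp
    qed
    obtain \<phi> :: "'a \<Rightarrow> complex" where \<phi>: "continuous_on UNIV \<phi>" "\<phi> x = 1"
      "\<forall>z. \<phi> z \<noteq> 0 \<longrightarrow> (\<sigma> ^^ minper \<sigma> x) z = z"
      using phi_exists[OF cpt x] by blast
    have m: "monoF (int (minper \<sigma> x)) \<phi> \<in> commutant00 \<sigma>" by (rule mC[OF \<phi>(1,3)])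
    have "omega2 \<sigma> x c (monoF (int (minper \<sigma> x)) \<phi>) = omega2 \<sigma> y d (monoF (int (minper \<sigma> x)) \<phi>)"
      using bspec[OF h m] .
    then have "omega2 \<sigma> x c (monoF (int (minper \<sigma> x)) \<phi>) = omega2 \<sigma> x d (monoF (int (minper \<sigma> x)) \<phi>)"
      using xy by simp
    then have "c = d" using o2_monon[OF x \<phi>(1), of c] o2_monon[OF x \<phi>(1), of d] \<phi>(2) by simp
    then show ?thesis using xy by simp
  qed
  have p4': "\<forall>x y. x \<notin> Uper \<sigma> \<and> y \<notin> Uper \<sigma> \<and>
         (\<forall>F\<in>commutant00 \<sigma>. omega1 x F = omega1 y F) \<longrightarrow> x = y"
    by (intro allI impI) (rule p4; blast)
  have p5': "\<forall>x y c. x \<notin> Uper \<sigma> \<and> y \<in> Uper \<sigma> \<and> c \<noteq> 0 \<longrightarrow>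
         \<not> (\<forall>F\<in>commutant00 \<sigma>. omega1 x F = omega2 \<sigma> y c F)"
    by (intro allI impI) (rule p5; blast)
  have p6': "\<forall>x y c d. x \<in> Uper \<sigma> \<and> y \<in> Uper \<sigma> \<and> c \<noteq> 0 \<and> d \<noteq> 0 \<and>
         (\<forall>F\<in>commutant00 \<sigma>. omega2 \<sigma> x c F = omega2 \<sigma> y d F) \<longrightarrow> x = y \<and> c = d"
    by (intro allI impI) (rule p6; blast)
  show ?thesis by (intro conjI) (rule p1 p2 p3 p4' p5' p6')+
qed

end
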